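(* Let $k \geq 1$ be an integer. The consensus number of the atomic $k$-sliding read/write register type is at least $k$; that is, in an asynchronous system of $k$ crash-prone processes communicating through atomic read/write registers and $k$-sliding read/write registers, there is a wait-free algorithm implementing a consensus object.
   Context: System model: $n$ sequential asynchronous processes $p_1,\dots,p_n$ communicating through shared atomic objects; any number of processes may crash (halt prematurely, never recovering); implementations must be wait-free (every operation invoked by a non-crashed process terminates regardless of the behavior of the others). A consensus object provides a single operation $\mathrm{propose}(v)$, invoked at most once per process and returning a value, satisfying: Validity (a decided value was proposed by some process), Agreement (no two processes decide different values), Termination (every correct process that invokes $\mathrm{propose}()$ decides). The consensus number of an object type $T$ is the largest $n$ such that consensus can be wait-free implemented among $n$ processes using atomic read/write registers and objects of type $T$ ($+\infty$ if no such finite $n$ exists). An atomic $k$-sliding read/write register is a shared object whose state is a sequence of values (initially empty), with two atomic (linearizable) operations: $\mathrm{write}(v)$ appends $v$ to the end of the sequence, and $\mathrm{read}()$ returns the ordered sequence of the last $k$ values written before it in the linearization order, where if only $x<k$ values have been written the $k-x$ missing values are replaced by a default value $\bot$. *)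

theory Defs
  imports Main "HOL-Library.Extended_Nat"
begin

datatype objkind = RWReg | SlideReg

datatype 'v op = Rd nat | Wr nat 'v

datatype 'v act = Invoke "'v op" | Decide 'v

text \<open>The program of process i maps its proposal and the sequence
  of responses received so far (full-information local state) to its next action.
  Responses are lists of values with bottom (None): a register read returns a
  one-element list, a k-sliding read returns a k-element list, a write returns [].\<close>
record 'v alg =
  kind :: "nat \<Rightarrow> objkind"
  prog :: "nat \<Rightarrow> 'v \<Rightarrow> 'v option list list \<Rightarrow> 'v act"

record 'v conf =
  mem :: "nat \<Rightarrow> 'v list"
  hist :: "nat \<Rightarrow> 'v option list list"
  dec :: "nat \<Rightarrow> 'v option"

definition init_conf :: "'v conf" where
  "init_conf = \<lparr>mem = (\<lambda>_. []), hist = (\<lambda>_. []), dec = (\<lambda>_. None)\<rparr>"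

definition read_obj :: "nat \<Rightarrow> objkind \<Rightarrow> 'v list \<Rightarrow> 'v option list" where
  "read_obj k ok h = (case ok of
      RWReg \<Rightarrow> [if h = [] then None else Some (last h)]
    | SlideReg \<Rightarrow> replicate (k - length h) None @ map Some (drop (length h - k) h))"

definition step :: "nat \<Rightarrow> 'v alg \<Rightarrow> (nat \<Rightarrow> 'v) \<Rightarrow> 'v conf \<Rightarrow> nat \<Rightarrow> 'v conf" where
  "step k A inp c i =
    (if dec c i \<noteq> None then c else
     (case prog A i (inp i) (hist c i) of
        Decide v \<Rightarrow> c\<lparr>dec := (dec c)(i := Some v)\<rparr>
      | Invoke (Rd x) \<Rightarrow>
          c\<lparr>hist := (hist c)(i := hist c i @ [read_obj k (kind A x) (mem c x)])\<rparr>
      | Invoke (Wr x v) \<Rightarrow>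
          c\<lparr>mem := (mem c)(x := mem c x @ [v]), hist := (hist c)(i := hist c i @ [[]])\<rparr>))"

definition run :: "nat \<Rightarrow> 'v alg \<Rightarrow> (nat \<Rightarrow> 'v) \<Rightarrow> nat list \<Rightarrow> 'v conf" where
  "run k A inp \<sigma> = foldl (step k A inp) init_conf \<sigma>"

text \<open>A wait-free implementation of consensus among processes 0..n-1 using registers
  and k-sliding registers.  inp i is the value proposed by process i; a process
  invokes propose at its first step.  Crashes: a process that takes only finitely many
  steps of an infinite schedule (or none) has crashed.\<close>
definition wf_consensus :: "nat \<Rightarrow> nat \<Rightarrow> 'v alg \<Rightarrow> bool" where
  "wf_consensus n k A \<longleftrightarrow>
     (\<forall>inp \<sigma> i j v w. set \<sigma> \<subseteq> {..<n} \<longrightarrow>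
         dec (run k A inp \<sigma>) i = Some v \<longrightarrow> dec (run k A inp \<sigma>) j = Some w \<longrightarrow> v = w) \<and>
     (\<forall>inp \<sigma> i v. set \<sigma> \<subseteq> {..<n} \<longrightarrow>
         dec (run k A inp \<sigma>) i = Some v \<longrightarrow> (\<exists>j\<in>set \<sigma>. v = inp j)) \<and>
     (\<forall>inp (s :: nat \<Rightarrow> nat) i. (\<forall>t. s t < n) \<longrightarrow> (\<exists>\<^sub>\<infinity>t. s t = i) \<longrightarrow>
         (\<exists>t. dec (run k A inp (map s [0..<t])) i \<noteq> None))"

definition consensus_number_sliding :: "'v itself \<Rightarrow> nat \<Rightarrow> enat" where
  "consensus_number_sliding (_ :: 'v itself) k =
     Sup {enat n | n. \<exists>A :: 'v alg. wf_consensus n k A}"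

end

theory Submission
  imports Defs
begin

lemma find_rep: "find P (replicate n None @ xs) = find P xs" if "\<not> P None" for P
  using that by (induction n) auto

lemma find_read: "W \<noteq> [] \<Longrightarrow> length W \<le> k \<Longrightarrow>
  find (\<lambda>x. x \<noteq> None) (read_obj k SlideReg W) = Some (Some (hd W))"
  by (cases W) (auto simp: read_obj_def find_rep)

definition Alg :: "'v alg" where
  "Alg = \<lparr>kind = (\<lambda>_. SlideReg),
          prog = (\<lambda>i v h. if h = [] then Invoke (Wr 0 v)
                          else if length h = 1 then Invoke (Rd 0)
                          else Decide (case find (\<lambda>x. x \<noteq> None) (h ! 1) of
                                         Some (Some w) \<Rightarrow> w | _ \<Rightarrow> v))\<rparr>"

definition Inv :: "nat \<Rightarrow> (nat \<Rightarrow> 'v) \<Rightarrow> 'v conf \<Rightarrow> nat list \<Rightarrow> bool" where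
  "Inv k inp c \<sigma> \<longleftrightarrow>
   (\<forall>i. length (hist c i) \<le> 2) \<and>
   (\<forall>i. hist c i \<noteq> [] \<longrightarrow> i < k \<and> i \<in> set \<sigma> \<and> mem c 0 \<noteq> []) \<and>
   length (mem c 0) = card {i. i < k \<and> hist c i \<noteq> []} \<and>
   (\<forall>x\<in>set (mem c 0). \<exists>j. hist c j \<noteq> [] \<and> x = inp j) \<and>
   (\<forall>i. length (hist c i) = 2 \<longrightarrow>
        find (\<lambda>x. x \<noteq> None) (hist c i ! 1) = Some (Some (hd (mem c 0)))) \<and>
   (\<forall>i v. dec c i = Some v \<longrightarrow> length (hist c i) = 2 \<and> v = hd (mem c 0)) \<and>
   (\<forall>i. dec c i = None \<longrightarrow> length (hist c i) = length (filter ((=) i) \<sigma>))"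

lemma Inv_init: "Inv k inp init_conf []"
  by (simp add: Inv_def init_conf_def)

lemma card_le: "card {i. i < k \<and> P i} \<le> k"
proof -
  have "card {i. i < k \<and> P i} \<le> card {..<k}"
    by (rule card_mono) auto
  then show ?thesis by simp
qed

lemma Inv_step:
  assumes I: "Inv k inp c \<sigma>" and ik: "i < k"
  shows "Inv k inp (step k Alg inp c i) (\<sigma> @ [i])"
proof -
  have I1: "\<forall>i. length (hist c i) \<le> 2"
   and I2: "\<forall>i. hist c i \<noteq> [] \<longrightarrow> i < k \<and> i \<in> set \<sigma> \<and> mem c 0 \<noteq> []"
   and I3: "length (mem c 0) = card {i. i < k \<and> hist c i \<noteq> []}"
   and I4: "\<forall>x\<in>set (mem c 0). \<exists>j. hist c j \<noteq> [] \<and> x = inp j"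
   and I5: "\<forall>i. length (hist c i) = 2 \<longrightarrow>
        find (\<lambda>x. x \<noteq> None) (hist c i ! 1) = Some (Some (hd (mem c 0)))"
   and I6: "\<forall>i v. dec c i = Some v \<longrightarrow> length (hist c i) = 2 \<and> v = hd (mem c 0)"
   and I7: "\<forall>i. dec c i = None \<longrightarrow> length (hist c i) = length (filter ((=) i) \<sigma>)"
    using I by (simp_all add: Inv_def)
  show ?thesis
  proof (cases "dec c i = None")
    case False
    then have st: "step k Alg inp c i = c" by (simp add: step_def)
    show ?thesis unfolding st Inv_def
    proof (intro conjI)
      show "\<forall>j. dec c j = None \<longrightarrow> length (hist c j) = length (filter ((=) j) (\<sigma> @ [i]))"
        using I7 False by simp
    qed (use I1 I2 I3 I4 I5 I6 in auto)
  next
    case dN: True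
    have "length (hist c i) \<le> 2" using I1 by blast
    then consider "hist c i = []" | "length (hist c i) = 1" | "length (hist c i) = 2"
      by (cases "hist c i"; cases "tl (hist c i)"; auto)
    then show ?thesis
    proof cases
      case 1
      let ?S = "{j. j < k \<and> hist c j \<noteq> []}"
      have st: "step k Alg inp c i = c\<lparr>mem := (mem c)(0 := mem c 0 @ [inp i]),
                    hist := (hist c)(i := [[]])\<rparr>"
        using dN 1 by (simp add: step_def Alg_def)
      have e: "hist (step k Alg inp c i) = (hist c)(i := [[]])"
        "mem (step k Alg inp c i) 0 = mem c 0 @ [inp i]" "dec (step k Alg inp c i) = dec c"
        using st by simp_all
      have S: "{j. j < k \<and> ((hist c)(i := [[]])) j \<noteq> []} = insert i ?S"
        using ik by auto
      have fin: "finite ?S" by (rule finite_subset[of _ "{..<k}"]) auto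
      have cd: "card (insert i ?S) = Suc (card ?S)"
        using fin 1 by simp
      have hd: "\<And>j. length (hist c j) = 2 \<Longrightarrow> hd (mem c 0 @ [inp i]) = hd (mem c 0)"
      proof -
        fix j assume "length (hist c j) = 2"
        then have "hist c j \<noteq> []" by auto
        then have "mem c 0 \<noteq> []" using I2 by blast
        then show "hd (mem c 0 @ [inp i]) = hd (mem c 0)" by simp
      qed
      show ?thesis unfolding Inv_def e S cd
      proof (intro conjI allI impI ballI)
        fix j show "length (((hist c)(i := [[]])) j) \<le> 2" using I1 by simp
      next
        fix j assume "((hist c)(i := [[]])) j \<noteq> []"
        then show "j < k" using I2 ik by (cases "j = i") auto
      next
        fix j assume "((hist c)(i := [[]])) j \<noteq> []"
        then show "j \<in> set (\<sigma> @ [i])" using I2 ik by (cases "j = i") auto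
      next
        fix j assume "((hist c)(i := [[]])) j \<noteq> []"
        then show "mem c 0 @ [inp i] \<noteq> []" by simp
      next
        show "length (mem c 0 @ [inp i]) = Suc (card ?S)" using I3 by simp
      next
        fix x assume "x \<in> set (mem c 0 @ [inp i])"
        then show "\<exists>j. ((hist c)(i := [[]])) j \<noteq> [] \<and> x = inp j"
        proof (cases "x \<in> set (mem c 0)")
          case True
          then obtain j where j: "hist c j \<noteq> []" "x = inp j" using I4 by blast
          then have "j \<noteq> i" using 1 by auto
          then show ?thesis using j by (intro exI[of _ j]) simp
        next
          case False
          then have "x = inp i" using \<open>x \<in> set (mem c 0 @ [inp i])\<close> by simp
          then show ?thesis by (intro exI[of _ i]) simp
        qed
      next
        fix j assume j: "length (((hist c)(i := [[]])) j) = 2"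
        then have "j \<noteq> i" by auto
        with j show "find (\<lambda>x. x \<noteq> None) (((hist c)(i := [[]])) j ! 1) = Some (Some (hd (mem c 0 @ [inp i])))"
          using I5 hd by simp
      next
        fix j v assume j: "dec c j = Some v"
        then have "j \<noteq> i" using dN by auto
        with j show "length (((hist c)(i := [[]])) j) = 2"
          using I6 hd by simp
      next
        fix j v assume j: "dec c j = Some v"
        then have "j \<noteq> i" using dN by auto
        have "length (hist c j) = 2" "v = hd (mem c 0)" using I6 j by blast+
        then show "v = hd (mem c 0 @ [inp i])" using hd by metis
      next
        fix j assume "dec c j = None"
        then show "length (((hist c)(i := [[]])) j) = length (filter ((=) j) (\<sigma> @ [i]))"
        proof (cases "j = i")
          case True
          have "length (hist c i) = length (filter ((=) i) \<sigma>)" using I7 dN by blast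
          then show ?thesis using True 1 by simp
        next
          case False then show ?thesis using I7 \<open>dec c j = None\<close> by simp
        qed
      qed
    next
      case 2
      let ?r = "read_obj k SlideReg (mem c 0)"
      have ne: "mem c 0 \<noteq> []" using I2 2 by force
      have le: "length (mem c 0) \<le> k" using I3 card_le by metis
      have st: "step k Alg inp c i = c\<lparr>hist := (hist c)(i := hist c i @ [?r])\<rparr>"
      proof -
        have "hist c i \<noteq> []" using 2 by auto
        then show ?thesis using dN 2 by (simp add: step_def Alg_def)
      qed
      have e: "hist (step k Alg inp c i) = (hist c)(i := hist c i @ [?r])"
        "mem (step k Alg inp c i) = mem c" "dec (step k Alg inp c i) = dec c"
        using st by simp_all
      have h1: "(hist c i @ [?r]) ! 1 = ?r"
        using 2 by (simp add: nth_append)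
      have S: "{j. j < k \<and> ((hist c)(i := hist c i @ [?r])) j \<noteq> []}
             = {j. j < k \<and> hist c j \<noteq> []}"
        using 2 by auto
      show ?thesis unfolding Inv_def e S
      proof (intro conjI allI impI ballI)
        fix j show "length (((hist c)(i := hist c i @ [?r])) j) \<le> 2" using I1 2 by simp
      next
        fix j assume "((hist c)(i := hist c i @ [?r])) j \<noteq> []"
        then show "j < k" using I2 ik ne by (cases "j = i") auto
      next
        fix j assume "((hist c)(i := hist c i @ [?r])) j \<noteq> []"
        then show "j \<in> set (\<sigma> @ [i])" using I2 ik ne by (cases "j = i") auto
      next
        fix j assume "((hist c)(i := hist c i @ [?r])) j \<noteq> []"
        then show "mem c 0 \<noteq> []" using ne by simp
      next
        show "length (mem c 0) = card {j. j < k \<and> hist c j \<noteq> []}" using I3 .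
      next
        fix x assume "x \<in> set (mem c 0)"
        then show "\<exists>j. ((hist c)(i := hist c i @ [?r])) j \<noteq> [] \<and> x = inp j"
          using I4 by (metis fun_upd_apply snoc_eq_iff_butlast)
      next
        fix j assume j: "length (((hist c)(i := hist c i @ [?r])) j) = 2"
        show "find (\<lambda>x. x \<noteq> None) (((hist c)(i := hist c i @ [?r])) j ! 1) = Some (Some (hd (mem c 0)))"
        proof (cases "j = i")
          case True then show ?thesis using h1 find_read[OF ne le] by simp
        next
          case False then show ?thesis using j I5 by simp
        qed
      next
        fix j v assume j: "dec c j = Some v"
        then have "j \<noteq> i" using dN by auto
        with j show "length (((hist c)(i := hist c i @ [?r])) j) = 2"
          using I6 by simp
      next
        fix j v assume j: "dec c j = Some v"
        then show "v = hd (mem c 0)" using I6 by simp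
      next
        fix j assume "dec c j = None"
        then show "length (((hist c)(i := hist c i @ [?r])) j) = length (filter ((=) j) (\<sigma> @ [i]))"
        proof (cases "j = i")
          case True
          have "length (hist c i) = length (filter ((=) i) \<sigma>)" using I7 dN by blast
          then show ?thesis using True 2 by simp
        next
          case False then show ?thesis using I7 \<open>dec c j = None\<close> by simp
        qed
      qed
    next
      case 3
      have f: "find (\<lambda>x. x \<noteq> None) (hist c i ! 1) = Some (Some (hd (mem c 0)))"
        using I5 3 by blast
      have st: "step k Alg inp c i = c\<lparr>dec := (dec c)(i := Some (hd (mem c 0)))\<rparr>"
      proof -
        have "hist c i \<noteq> []" using 3 by auto
        then show ?thesis using dN 3 f by (simp add: step_def Alg_def)
      qed
      have e: "hist (step k Alg inp c i) = hist c" "mem (step k Alg inp c i) = mem c"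
        "dec (step k Alg inp c i) = (dec c)(i := Some (hd (mem c 0)))"
        using st by simp_all
      show ?thesis unfolding e Inv_def
      proof (intro conjI)
        show "\<forall>j v. ((dec c)(i := Some (hd (mem c 0)))) j = Some v \<longrightarrow> length (hist c j) = 2 \<and> v = hd (mem c 0)"
          using I6 3 by auto
        show "\<forall>j. ((dec c)(i := Some (hd (mem c 0)))) j = None \<longrightarrow> length (hist c j) = length (filter ((=) j) (\<sigma> @ [i]))"
          using I7 by auto
      qed (use I1 I2 I3 I4 I5 in auto)
    qed
  qed
qed

lemma run_snoc: "run k A inp (\<sigma> @ [i]) = step k A inp (run k A inp \<sigma>) i"
  by (simp add: run_def)

lemma Inv_run: "set \<sigma> \<subseteq> {..<k} \<Longrightarrow> Inv k inp (run k Alg inp \<sigma>) \<sigma>"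
proof (induction \<sigma> rule: rev_induct)
  case Nil
  then show ?case by (simp add: run_def Inv_init)
next
  case (snoc i \<sigma>)
  then show ?case by (simp add: run_snoc Inv_step)
qed

lemma wf: "wf_consensus k k (Alg :: 'v alg)"
  unfolding wf_consensus_def
proof (intro conjI allI impI)
  fix inp :: "nat \<Rightarrow> 'v" and \<sigma> i j v w
  assume "set \<sigma> \<subseteq> {..<k}" "dec (run k Alg inp \<sigma>) i = Some v" "dec (run k Alg inp \<sigma>) j = Some w"
  then show "v = w" using Inv_run[of \<sigma> k inp] unfolding Inv_def by metis
next
  fix inp :: "nat \<Rightarrow> 'v" and \<sigma> i v
  assume a: "set \<sigma> \<subseteq> {..<k}" "dec (run k Alg inp \<sigma>) i = Some v"
  let ?c = "run k Alg inp \<sigma>"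
  have I: "Inv k inp ?c \<sigma>" using Inv_run[OF a(1)] .
  then have "length (hist ?c i) = 2" "v = hd (mem ?c 0)" using a(2) unfolding Inv_def by blast+
  moreover have "mem ?c 0 \<noteq> []" using I calculation(1) unfolding Inv_def
    by (metis list.size(3) zero_neq_numeral)
  ultimately have "v \<in> set (mem ?c 0)" by simp
  then obtain j where "hist ?c j \<noteq> []" "v = inp j" using I unfolding Inv_def by blast
  then show "\<exists>j\<in>set \<sigma>. v = inp j" using I unfolding Inv_def by blast
next
  fix inp :: "nat \<Rightarrow> 'v" and s :: "nat \<Rightarrow> nat" and i
  assume s: "\<forall>t. s t < k" and inf: "\<exists>\<^sub>\<infinity>t. s t = i"
  have "infinite {t. s t = i}" using inf by (simp add: INFM_iff_infinite)
  then obtain F where F: "F \<subseteq> {t. s t = i}" "finite F" "card F = 3"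
    using infinite_arbitrarily_large by blast
  define T where "T = Suc (Max F)"
  have "F \<subseteq> {t. t < T \<and> s t = i}"
    using F by (auto simp: T_def less_Suc_eq_le)
  then have "3 \<le> card {t. t < T \<and> s t = i}"
    using F by (metis card_mono finite_Collect_conjI finite_Collect_less_nat)
  moreover have "length (filter ((=) i) (map s [0..<T])) = card {t. t < T \<and> s t = i}"
  proof -
    have "{ia. ia < T \<and> i = map s [0..<T] ! ia} = {t. t < T \<and> s t = i}" by auto
    then show ?thesis by (simp add: length_filter_conv_card)
  qed
  ultimately have c3: "3 \<le> length (filter ((=) i) (map s [0..<T]))" by simp
  let ?c = "run k Alg inp (map s [0..<T])"
  have "set (map s [0..<T]) \<subseteq> {..<k}" using s by auto
  then have I: "Inv k inp ?c (map s [0..<T])" by (rule Inv_run)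
  have "dec ?c i \<noteq> None"
  proof
    assume "dec ?c i = None"
    then have "length (hist ?c i) = length (filter ((=) i) (map s [0..<T]))"
      using I unfolding Inv_def by blast
    moreover have "length (hist ?c i) \<le> 2" using I unfolding Inv_def by blast
    ultimately show False using c3 by simp
  qed
  then show "\<exists>t. dec (run k Alg inp (map s [0..<t])) i \<noteq> None" by blast
qed

theorem theorem1:
  fixes k :: nat
  assumes "k \<ge> 1"
  shows "enat k \<le> consensus_number_sliding TYPE('v) k"
  unfolding consensus_number_sliding_def
  by (rule Sup_upper) (use wf in blast)

end
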